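(* Fix constants $\lambda_1,\ldots,\lambda_K\ge 0$ and $\Gamma^{\rm ST}_1,\ldots,\Gamma^{\rm ST}_M>0$. For a channel realization $\boldsymbol{\alpha}$ consider the problem $$\max_{p_1,\ldots,p_K}\ \log\Big(1+\sum_{k=1}^K h_kp_k\Big)-\sum_{k=1}^K\lambda_kp_k\quad\text{s.t.}\quad \sum_{k=1}^K g_{km}p_k\le\Gamma_m^{\rm ST}\ \ \forall m,\qquad p_k\ge 0\ \ \forall k.$$ Then, for almost every realization $\boldsymbol{\alpha}$, an optimal solution of this problem has at most $M+1$ indices $k$ with $p_k>0$.
   Context: $\boldsymbol{\alpha}=(h_1,\ldots,h_K,g_{11},\ldots,g_{KM})$ is a random vector of nonnegative channel power gains ($h_k$: secondary user $k$ to secondary base station; $g_{km}$: secondary user $k$ to primary receiver $m$, $m=1,\ldots,M$) with a continuous, differentiable joint cumulative distribution function, the $h_k$'s and $g_{km}$'s being independent. *)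

theory Defs
  imports "HOL-Probability.Probability"
begin

text \<open>A channel realization is a vector indexed by 'k + ('k \<times> 'm):
  component Inl k is h_k (SU k to secondary base station),
  component Inr (k,m) is g_km (SU k to primary receiver m).\<close>

definition feasible ::
  "real^'m \<Rightarrow> real^('k::finite + ('k \<times> 'm::finite)) \<Rightarrow> real^'k \<Rightarrow> bool" where
  "feasible \<Gamma> \<alpha> p \<longleftrightarrow>
     (\<forall>k. p $ k \<ge> 0) \<and>
     (\<forall>m. (\<Sum>k\<in>UNIV. \<alpha> $ Inr (k, m) * p $ k) \<le> \<Gamma> $ m)"

definition objective ::
  "real^'k \<Rightarrow> real^('k::finite + ('k \<times> 'm::finite)) \<Rightarrow> real^'k \<Rightarrow> real" where
  "objective lam \<alpha> p = ln (1 + (\<Sum>k\<in>UNIV. \<alpha> $ Inl k * p $ k)) - (\<Sum>k\<in>UNIV. lam $ k * p $ k)"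

definition optimal ::
  "real^'k \<Rightarrow> real^'m \<Rightarrow> real^('k::finite + ('k \<times> 'm::finite)) \<Rightarrow> real^'k \<Rightarrow> bool" where
  "optimal lam \<Gamma> \<alpha> p \<longleftrightarrow> feasible \<Gamma> \<alpha> p \<and>
     (\<forall>q. feasible \<Gamma> \<alpha> q \<longrightarrow> objective lam \<alpha> q \<le> objective lam \<alpha> p)"

end

theory Submission
  imports Defs
begin

definition badset :: "'k set \<Rightarrow> real^'k \<Rightarrow> (real^('k::finite + ('k \<times> 'm::finite))) set" where
  "badset T lam = {\<alpha>. \<exists>a c. \<forall>k\<in>T. \<alpha>$Inl k = a * lam$k + (\<Sum>m\<in>UNIV. c m * \<alpha>$Inr(k,m))}"

lemma neg_bad:
  fixes T :: "'k::finite set" and lam :: "real^'k"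
  assumes card: "CARD('m::finite) + 2 \<le> card T"
  shows "negligible (badset T lam :: (real^('k + ('k \<times> 'm))) set)"
proof -
  have "card T \<noteq> 0" using card by linarith
  then obtain k0 where k0: "k0 \<in> T" by (metis card.empty ex_in_conv)
  have "card (T - {k0}) \<noteq> 0" using card k0 by simp
  then obtain k1 where k1: "k1 \<in> T - {k0}" by (metis card.empty ex_in_conv)
  have "card (T - {k0} - {k1}) = card T - 2" using k0 k1 by simp
  hence "card (UNIV::'m set) \<le> card (T - {k0} - {k1})" using card by simp
  then obtain \<sigma> :: "'m \<Rightarrow> 'k" where sig: "\<sigma> ` UNIV \<subseteq> T - {k0} - {k1}" "inj \<sigma>"
    using card_le_inj[of "UNIV::'m set" "T - {k0} - {k1}"] by auto
  define F :: "real^('k + ('k \<times> 'm)) \<Rightarrow> real^('k + ('k \<times> 'm))" where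
    "F x = (\<chi> i. case i of Inl k \<Rightarrow> (if k \<in> T then x$Inl k0 * lam$k + (\<Sum>m\<in>UNIV. x$Inl(\<sigma> m) * x$Inr(k,m)) else x$i)
        | Inr j \<Rightarrow> x$i)" for x
  define H where "H = {x :: real^('k + ('k \<times> 'm)). axis (Inl k1) 1 \<bullet> x = 0}"
  have negH: "negligible H" unfolding H_def
    by (rule negligible_hyperplane) (simp add: axis_eq_0_iff)
  have diff: "F differentiable_on H"
  proof -
    have "F differentiable (at x within H)" for x
    proof (subst differentiable_componentwise_within, intro ballI)
      fix b :: "real^('k + ('k \<times> 'm))" assume "b \<in> Basis"
      then obtain i where b: "b = axis i 1" by (auto simp: Basis_vec_def)
      have lin: "(\<lambda>x::real^('k + ('k \<times> 'm)). x $ j) differentiable (at x within H)" for j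
        by (rule bounded_linear_imp_differentiable) (rule bounded_linear_vec_nth)
      show "(\<lambda>x. F x \<bullet> b) differentiable (at x within H)"
        unfolding b inner_axis F_def
        by (cases i; cases "projl i \<in> T") (auto intro!: derivative_intros lin)
    qed
    thus ?thesis by (simp add: differentiable_on_def)
  qed
  have "badset T lam \<subseteq> F ` H"
  proof
    fix \<alpha> :: "real^('k + ('k \<times> 'm))" assume "\<alpha> \<in> badset T lam"
    then obtain a c where ac: "\<forall>k\<in>T. \<alpha>$Inl k = a * lam$k + (\<Sum>m\<in>UNIV. c m * \<alpha>$Inr(k,m))"
      unfolding badset_def by blast
    define x :: "real^('k + ('k \<times> 'm))" where
      "x = (\<chi> i. case i of Inl k \<Rightarrow> (if k = k0 then a else if k \<in> range \<sigma> then c (inv \<sigma> k) else if k \<in> T then 0 else \<alpha>$i)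
        | Inr j \<Rightarrow> \<alpha>$i)"
    have s1: "\<sigma> m \<noteq> k0" "\<sigma> m \<noteq> k1" "\<sigma> m \<in> T" for m using sig by auto
    have "k1 \<notin> range \<sigma>" using sig by auto
    hence "x \<in> H" using k0 k1 sig unfolding H_def x_def by (auto simp: inner_axis')
    moreover have "F x = \<alpha>"
    proof (rule vec_eq_iff[THEN iffD2], rule allI)
      fix i show "F x $ i = \<alpha> $ i"
      proof (cases i)
        case (Inl k)
        show ?thesis
        proof (cases "k \<in> T")
          case True
          thus ?thesis using ac Inl s1 sig(2) unfolding F_def x_def by (simp add: inv_f_f)
        next
          case False
          thus ?thesis using Inl k0 sig(1) unfolding F_def x_def by auto
        qed
      next
        case (Inr j) thus ?thesis unfolding F_def x_def by simp
      qed
    qed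
    ultimately show "\<alpha> \<in> F ` H" by blast
  qed
  thus ?thesis using negligible_differentiable_image_negligible[OF order_refl negH diff]
    negligible_subset by blast
qed

lemma stationary:
  fixes lam :: "real^'k::finite" and \<Gamma> :: "real^'m::finite" and \<alpha> :: "real^('k + ('k \<times> 'm))"
  assumes opt: "optimal lam \<Gamma> \<alpha> p"
    and nn: "\<forall>i. \<alpha> $ i \<ge> 0"
    and dT: "\<forall>k. p$k \<le> 0 \<longrightarrow> d$k = 0"
    and dker: "\<forall>m. (\<Sum>k\<in>UNIV. \<alpha>$Inr(k,m) * d$k) = 0"
  shows "(\<Sum>k\<in>UNIV. \<alpha>$Inl k * d$k) / (1 + (\<Sum>k\<in>UNIV. \<alpha>$Inl k * p$k)) - (\<Sum>k\<in>UNIV. lam$k * d$k) = 0"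
proof -
  define A where "A = (\<Sum>k\<in>UNIV. \<alpha>$Inl k * p$k)"
  define B where "B = (\<Sum>k\<in>UNIV. \<alpha>$Inl k * d$k)"
  define C where "C = (\<Sum>k\<in>UNIV. lam$k * p$k)"
  define D where "D = (\<Sum>k\<in>UNIV. lam$k * d$k)"
  have feas: "feasible \<Gamma> \<alpha> p" and max: "\<And>q. feasible \<Gamma> \<alpha> q \<Longrightarrow> objective lam \<alpha> q \<le> objective lam \<alpha> p"
    using opt unfolding optimal_def by auto
  have pnn: "\<forall>k. p$k \<ge> 0" using feas unfolding feasible_def by auto
  have A0: "A \<ge> 0" unfolding A_def using nn pnn by (auto intro!: sum_nonneg)
  define f where "f e = ln (1 + (A + e * B)) - (C + e * D)" for e :: real
  have obj: "objective lam \<alpha> (p + e *\<^sub>R d) = f e" for e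
    unfolding objective_def f_def A_def B_def C_def D_def
    by (simp add: algebra_simps sum.distrib sum_distrib_left)
  have feas2: "feasible \<Gamma> \<alpha> (p + e *\<^sub>R d)" if "\<forall>k. 0 \<le> p$k + e * d$k" for e
  proof -
    have "(\<Sum>k\<in>UNIV. \<alpha> $ Inr (k, m) * (p + e *\<^sub>R d) $ k) = (\<Sum>k\<in>UNIV. \<alpha> $ Inr (k, m) * p $ k)" for m
      using dker by (simp add: algebra_simps sum.distrib sum_distrib_left[symmetric])
    thus ?thesis using that feas unfolding feasible_def by simp
  qed
  have ev: "eventually (\<lambda>e. \<forall>k. 0 \<le> p$k + e * d$k) (nhds (0::real))"
  proof (rule eventually_all_finite)
    fix k
    show "eventually (\<lambda>e. 0 \<le> p$k + e * d$k) (nhds (0::real))"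
    proof (cases "p$k > 0")
      case True
      have "((\<lambda>e. p$k + e * d$k) \<longlongrightarrow> p$k + 0 * d$k) (nhds (0::real))"
        by (intro tendsto_intros) (simp add: tendsto_ident_at filterlim_ident)
      hence "eventually (\<lambda>e. 0 < p$k + e * d$k) (nhds (0::real))"
        using True by (auto dest: order_tendstoD(1))
      thus ?thesis by eventually_elim simp
    next
      case False
      thus ?thesis using dT pnn by (auto intro: always_eventually)
    qed
  qed
  then obtain r where r: "r > 0" "\<forall>e. dist e 0 < r \<longrightarrow> (\<forall>k. 0 \<le> p$k + e * d$k)"
    unfolding eventually_nhds_metric by blast
  have loc: "\<forall>e. \<bar>0 - e\<bar> < r \<longrightarrow> f e \<le> f 0"
  proof (intro allI impI)
    fix e :: real assume "\<bar>0 - e\<bar> < r"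
    hence "\<forall>k. 0 \<le> p$k + e * d$k" using r by (auto simp: dist_real_def)
    hence "objective lam \<alpha> (p + e *\<^sub>R d) \<le> objective lam \<alpha> p" using max feas2 by blast
    moreover have "objective lam \<alpha> p = f 0" using obj[of 0] by simp
    ultimately show "f e \<le> f 0" using obj by simp
  qed
  have "DERIV f 0 :> (B / (1 + A) - D)"
    unfolding f_def using A0
    by (auto intro!: derivative_eq_intros)
  from DERIV_local_max[OF this r(1) loc] show ?thesis unfolding A_def B_def D_def .
qed

lemma in_bad:
  fixes lam :: "real^'k::finite" and \<Gamma> :: "real^'m::finite" and \<alpha> :: "real^('k + ('k \<times> 'm))"
  assumes opt: "optimal lam \<Gamma> \<alpha> p"
    and nn: "\<forall>i. \<alpha> $ i \<ge> 0"
  shows "\<alpha> \<in> badset {k. p$k > 0} lam"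
proof -
  define T where "T = {k. p$k > 0}"
  define A where "A = (\<Sum>k\<in>UNIV. \<alpha>$Inl k * p$k)"
  have pnn: "\<forall>k. p$k \<ge> 0" using opt unfolding optimal_def feasible_def by auto
  have A0: "A \<ge> 0" unfolding A_def using nn pnn by (auto intro!: sum_nonneg)
  define t where "t = 1 / (1 + A)"
  define w :: "real^'k" where "w = (\<chi> k. t * \<alpha>$Inl k - lam$k)"
  have stat: "w \<bullet> d = 0" if "\<forall>k. k \<notin> T \<longrightarrow> d$k = 0" "\<forall>m. (\<Sum>k\<in>UNIV. \<alpha>$Inr(k,m) * d$k) = 0" for d
  proof -
    have "(\<Sum>k\<in>UNIV. \<alpha>$Inl k * d$k) / (1 + A) - (\<Sum>k\<in>UNIV. lam$k * d$k) = 0"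
      using stationary[OF opt nn, of d] that unfolding A_def T_def by force
    thus ?thesis unfolding w_def t_def inner_vec_def
      by (simp add: algebra_simps sum_subtractf sum_distrib_left sum_divide_distrib)
  qed
  define v :: "'m \<Rightarrow> real^'k" where "v m = (\<chi> k. if k \<in> T then \<alpha>$Inr(k,m) else 0)" for m
  define U where "U = range v \<union> (\<lambda>k. axis k 1) ` (- T)"
  obtain y z where yz: "y \<in> span U" "\<And>u. u \<in> span U \<Longrightarrow> orthogonal z u" "w = y + z"
    using orthogonal_subspace_decomp_exists[of U w] by metis
  have z0: "z$k = 0" if "k \<notin> T" for k
  proof -
    have "orthogonal z (axis k 1)" using yz(2) that by (auto simp: U_def intro: span_base)
    thus ?thesis by (simp add: orthogonal_def inner_axis)
  qed
  have zker: "(\<Sum>k\<in>UNIV. \<alpha>$Inr(k,m) * z$k) = 0" for m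
  proof -
    have "orthogonal z (v m)" using yz(2) by (auto simp: U_def intro: span_base)
    hence "(\<Sum>k\<in>UNIV. z$k * (if k \<in> T then \<alpha>$Inr(k,m) else 0)) = 0"
      by (simp add: orthogonal_def inner_vec_def v_def)
    moreover have "(\<Sum>k\<in>UNIV. z$k * (if k \<in> T then \<alpha>$Inr(k,m) else 0)) = (\<Sum>k\<in>UNIV. \<alpha>$Inr(k,m) * z$k)"
      by (rule sum.cong) (auto simp: z0)
    ultimately show ?thesis by simp
  qed
  have "w \<bullet> z = 0" using stat z0 zker by blast
  moreover have "y \<bullet> z = 0" using yz(2)[OF yz(1)] by (simp add: orthogonal_def inner_commute)
  ultimately have "z \<bullet> z = 0" using yz(3) by (simp add: inner_add_left)
  hence "z = 0" by simp
  hence wspan: "w \<in> span U" using yz by simp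
  define W where "W = {u :: real^'k. \<exists>c. \<forall>k\<in>T. u$k = (\<Sum>m\<in>UNIV. c m * \<alpha>$Inr(k,m))}"
  have W0: "0 \<in> W" unfolding W_def by (rule CollectI, rule exI[of _ "\<lambda>_. 0"]) simp
  have Wadd: "x + y \<in> W" if xyW: "x \<in> W" "y \<in> W" for x y
  proof -
    obtain c1 c2 where "\<forall>k\<in>T. x$k = (\<Sum>m\<in>UNIV. c1 m * \<alpha>$Inr(k,m))"
      "\<forall>k\<in>T. y$k = (\<Sum>m\<in>UNIV. c2 m * \<alpha>$Inr(k,m))" using xyW unfolding W_def by auto
    thus ?thesis unfolding W_def
      by (auto intro!: exI[of _ "\<lambda>m. c1 m + c2 m"] simp: algebra_simps sum.distrib)
  qed
  have Wsc: "a *\<^sub>R x \<in> W" if xW: "x \<in> W" for a x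
  proof -
    obtain c1 where "\<forall>k\<in>T. x$k = (\<Sum>m\<in>UNIV. c1 m * \<alpha>$Inr(k,m))" using xW unfolding W_def by auto
    thus ?thesis unfolding W_def
      by (auto intro!: exI[of _ "\<lambda>m. a * c1 m"] simp: algebra_simps sum_distrib_left)
  qed
  have "subspace W" unfolding subspace_def using W0 Wadd Wsc by blast
  moreover have "U \<subseteq> W"
  proof
    fix u assume "u \<in> U"
    then consider m where "u = v m" | k where "k \<notin> T" "u = axis k 1" unfolding U_def by auto
    thus "u \<in> W"
    proof cases
      case (1 m)
      show ?thesis unfolding W_def 1 v_def
        by (auto intro!: exI[of _ "\<lambda>m'. if m' = m then 1 else 0"] simp: if_distrib[of "\<lambda>x. x * _"] cong: if_cong)
    next
      case (2 k)
      show ?thesis unfolding W_def 2 using 2(1)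
        by (auto intro!: exI[of _ "\<lambda>_. 0"] simp: axis_def)
    qed
  qed
  ultimately have "w \<in> W" using span_minimal wspan by blast
  then obtain c where c: "\<forall>k\<in>T. w$k = (\<Sum>m\<in>UNIV. c m * \<alpha>$Inr(k,m))" unfolding W_def by auto
  have "\<forall>k\<in>T. \<alpha>$Inl k = (1 + A) * lam$k + (\<Sum>m\<in>UNIV. ((1 + A) * c m) * \<alpha>$Inr(k,m))"
  proof
    fix k assume "k \<in> T"
    hence "t * \<alpha>$Inl k - lam$k = (\<Sum>m\<in>UNIV. c m * \<alpha>$Inr(k,m))" using c unfolding w_def by simp
    hence "\<alpha>$Inl k = (1 + A) * (lam$k + (\<Sum>m\<in>UNIV. c m * \<alpha>$Inr(k,m)))"
      unfolding t_def using A0 by (simp add: field_simps)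
    thus "\<alpha>$Inl k = (1 + A) * lam$k + (\<Sum>m\<in>UNIV. ((1 + A) * c m) * \<alpha>$Inr(k,m))"
      by (simp add: algebra_simps sum_distrib_left)
  qed
  hence "\<exists>a c. \<forall>k\<in>T. \<alpha>$Inl k = a * lam$k + (\<Sum>m\<in>UNIV. c m * \<alpha>$Inr(k,m))"
    by (intro exI[of _ "1 + A"] exI[of _ "\<lambda>m. (1 + A) * c m"])
  thus ?thesis unfolding badset_def T_def by blast
qed

theorem lemma3p3:
  fixes lam :: "real^'k::finite"
    and \<Gamma> :: "real^'m::finite"
    and P :: "(real^('k + ('k \<times> 'm))) measure"
  assumes lam_nonneg: "\<forall>k. lam $ k \<ge> 0"
    and \<Gamma>_pos: "\<forall>m. \<Gamma> $ m > 0"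
    and prob: "prob_space P"
    and sets_P: "sets P = sets borel"
    and density: "absolutely_continuous lborel P"
    and indep: "prob_space.indep_vars P (\<lambda>_. borel) (\<lambda>i \<alpha>. \<alpha> $ i) UNIV"
    and nonneg: "AE \<alpha> in P. \<forall>i. \<alpha> $ i \<ge> 0"
  shows "AE \<alpha> in P. \<forall>p. optimal lam \<Gamma> \<alpha> p \<longrightarrow>
           card {k. p $ k > 0} \<le> CARD('m) + 1"
proof -
  define Bad where "Bad = (\<Union>T\<in>{T::'k set. CARD('m) + 2 \<le> card T}. (badset T lam :: (real^('k + ('k \<times> 'm))) set))"
  have "negligible Bad" unfolding Bad_def
    by (rule negligible_Union) (auto intro: neg_bad)
  hence "Bad \<in> null_sets lebesgue" by (simp add: negligible_iff_null_sets)
  hence "AE x in lebesgue. x \<notin> Bad" by (rule AE_not_in)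
  hence "AE x in lborel. x \<notin> Bad" by (simp add: AE_completion_iff)
  then obtain N where N0: "{x \<in> space lborel. \<not> x \<notin> Bad} \<subseteq> N" "emeasure lborel N = 0" "N \<in> sets lborel"
    by (rule AE_E)
  have N: "N \<in> null_sets lborel" "{x \<in> space lborel. \<not> x \<notin> Bad} \<subseteq> N"
    using N0 by (auto intro: null_setsI)
  have NP: "N \<in> null_sets P" using N(1) density unfolding absolutely_continuous_def by blast
  have sp: "space P = UNIV" using sets_eq_imp_space_eq[OF sets_P] by simp
  have "AE x in P. x \<notin> Bad"
    by (rule AE_I'[OF NP]) (use N(2) sp in auto)
  with nonneg show ?thesis
  proof eventually_elim
    case (elim \<alpha>)
    show ?case
    proof (intro allI impI)
      fix p assume opt: "optimal lam \<Gamma> \<alpha> p"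
      have "\<alpha> \<in> badset {k. p$k > 0} lam" using in_bad[OF opt] elim by blast
      hence "\<not> CARD('m) + 2 \<le> card {k. p$k > 0}" using elim unfolding Bad_def by blast
      thus "card {k. p $ k > 0} \<le> CARD('m) + 1" by linarith
    qed
  qed
qed

end
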